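(* For every $n\geq 8$ with $n\equiv 0,2,8$ or $10 \pmod{16}$, there exists an almost 2-perfect maximum 8-cycle packing of $K_n$.
   Context: An 8-cycle packing of $K_n$ on vertex set $\mathcal{X}$ is a triple $(\mathcal{X},\mathcal{C},\mathcal{L})$ with $\mathcal{C}$ a collection of pairwise edge-disjoint 8-cycles of $K_n$ and leave $\mathcal{L}$ the set of edges in no cycle of $\mathcal{C}$; it is maximum if $|\mathcal{L}|$ is minimum among all 8-cycle packings of $K_n$. For an 8-cycle $C$, an inside 8-cycle of $C$ is an 8-cycle on the same vertex set sharing no edge with $C$. The packing is almost 2-perfect if one can choose for each $C\in\mathcal{C}$ an inside 8-cycle $C'$ such that $(\mathcal{X},\{C'\},\mathcal{L})$ is again an 8-cycle packing with the same leave. *)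

theory Defs
  imports Main
begin

definition complete_edges :: "'a set \<Rightarrow> 'a set set" where
  "complete_edges X = {e. e \<subseteq> X \<and> card e = 2}"

definition cycle_edges :: "'a list \<Rightarrow> 'a set set" where
  "cycle_edges vs = {{vs ! i, vs ! ((i + 1) mod length vs)} | i. i < length vs}"

definition is_8cycle :: "'a set \<Rightarrow> 'a set set \<Rightarrow> bool" where
  "is_8cycle X C \<longleftrightarrow>
     (\<exists>vs. length vs = 8 \<and> distinct vs \<and> set vs \<subseteq> X \<and> C = cycle_edges vs)"

definition is_8cycle_packing :: "'a set \<Rightarrow> 'a set set set \<Rightarrow> 'a set set \<Rightarrow> bool" where
  "is_8cycle_packing X Cs L \<longleftrightarrow>
     (\<forall>C\<in>Cs. is_8cycle X C) \<and>
     (\<forall>C1\<in>Cs. \<forall>C2\<in>Cs. C1 \<noteq> C2 \<longrightarrow> C1 \<inter> C2 = {}) \<and>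
     L = complete_edges X - \<Union>Cs"

definition is_maximum_8cycle_packing :: "'a set \<Rightarrow> 'a set set set \<Rightarrow> 'a set set \<Rightarrow> bool" where
  "is_maximum_8cycle_packing X Cs L \<longleftrightarrow>
     is_8cycle_packing X Cs L \<and>
     (\<forall>Cs' L'. is_8cycle_packing X Cs' L' \<longrightarrow> card L \<le> card L')"

definition inside_8cycle :: "'a set \<Rightarrow> 'a set set \<Rightarrow> 'a set set \<Rightarrow> bool" where
  "inside_8cycle X C C' \<longleftrightarrow> is_8cycle X C' \<and> \<Union>C' = \<Union>C \<and> C \<inter> C' = {}"

definition almost_2_perfect :: "'a set \<Rightarrow> 'a set set set \<Rightarrow> 'a set set \<Rightarrow> bool" where
  "almost_2_perfect X Cs L \<longleftrightarrow>
     is_8cycle_packing X Cs L \<and>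
     (\<exists>f. (\<forall>C\<in>Cs. inside_8cycle X C (f C)) \<and> is_8cycle_packing X (f ` Cs) L)"

end

theory Submission
  imports Defs
begin


lemma cycle_edges_list:
  "cycle_edges vs = set (map (\<lambda>i. {vs!i, vs!((i+1) mod length vs)}) [0..<length vs])"
  unfolding cycle_edges_def by auto

definition eimg :: "('a \<Rightarrow> 'b) \<Rightarrow> 'a set set \<Rightarrow> 'b set set" where
  "eimg f C = (\<lambda>e. f ` e) ` C"

lemma cycle_edges_map: "cycle_edges (map f vs) = eimg f (cycle_edges vs)"
proof -
  have "\<And>i. i < length vs \<Longrightarrow> (i+1) mod length vs < length vs"
    by (metis mod_less_divisor not_less_zero gr0I)
  then have eq: "cycle_edges (map f vs) = (\<lambda>i. f ` {vs!i, vs!((i+1) mod length vs)}) ` {0..<length vs}"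
    unfolding cycle_edges_list by (auto intro!: image_cong)
  show ?thesis by (simp add: eq cycle_edges_list[of vs] eimg_def image_image)
qed

lemma Union_cycle_edges: "vs \<noteq> [] \<Longrightarrow> \<Union>(cycle_edges vs) = set vs"
proof
  assume ne: "vs \<noteq> []"
  show "\<Union>(cycle_edges vs) \<subseteq> set vs"
    unfolding cycle_edges_def using ne by auto
  show "set vs \<subseteq> \<Union>(cycle_edges vs)"
  proof
    fix x assume "x \<in> set vs"
    then obtain i where "i < length vs" "vs!i = x" by (auto simp: in_set_conv_nth)
    then show "x \<in> \<Union>(cycle_edges vs)" unfolding cycle_edges_def by blast
  qed
qed

lemma is_8cycle_ne: "is_8cycle X C \<Longrightarrow> C \<noteq> {}"
  unfolding is_8cycle_def cycle_edges_def by fastforce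

lemma is_8cycle_sub: "is_8cycle X C \<Longrightarrow> C \<subseteq> complete_edges X"
proof
  fix e assume "is_8cycle X C" "e \<in> C"
  then obtain vs i where vs: "length vs = 8" "distinct vs" "set vs \<subseteq> X" "i < 8"
     "e = {vs!i, vs!((i+1) mod 8)}"
    unfolding is_8cycle_def cycle_edges_def by auto
  have a: "(i+1) mod 8 < 8" by simp
  have "(i+1) mod 8 \<noteq> i" using vs(4) by presburger
  then have "vs!i \<noteq> vs!((i+1) mod 8)"
    using vs(1,2,4) a nth_eq_iff_index_eq[of vs i "(i+1) mod 8"] by auto
  moreover have "vs!i \<in> X" "vs!((i+1) mod 8) \<in> X" using vs a by (auto intro!: subsetD[OF vs(3)] nth_mem)
  ultimately show "e \<in> complete_edges X" unfolding complete_edges_def using vs(5) by auto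
qed

lemma framework_packing:
  fixes B :: "'i set" and Q :: "'i \<Rightarrow> ('a set set \<times> 'a set set) list"
    and E :: "'i \<Rightarrow> 'a set set" and pr :: "'a set set \<times> 'a set set \<Rightarrow> 'a set set"
  assumes A1: "\<And>b p. b\<in>B \<Longrightarrow> p \<in> set (Q b) \<Longrightarrow> is_8cycle X (pr p)"
  and A2: "\<And>b i j. b\<in>B \<Longrightarrow> i < length (Q b) \<Longrightarrow> j < length (Q b) \<Longrightarrow> i \<noteq> j
      \<Longrightarrow> pr (Q b!i) \<inter> pr (Q b!j) = {}"
  and A3: "\<And>b. b\<in>B \<Longrightarrow> \<Union>(pr ` set (Q b)) = E b"
  and A4: "\<And>b b'. b\<in>B \<Longrightarrow> b'\<in>B \<Longrightarrow> b\<noteq>b' \<Longrightarrow> E b \<inter> E b' = {}"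
  and A5: "(\<Union>b\<in>B. E b) = complete_edges X - L" and A6: "L \<subseteq> complete_edges X"
  shows "is_8cycle_packing X (\<Union>b\<in>B. pr ` set (Q b)) L"
  unfolding is_8cycle_packing_def
proof (intro conjI ballI impI)
  fix C assume "C \<in> (\<Union>b\<in>B. pr ` set (Q b))"
  then show "is_8cycle X C" using A1 by auto
next
  fix C1 C2 assume c1: "C1 \<in> (\<Union>b\<in>B. pr ` set (Q b))" and c2: "C2 \<in> (\<Union>b\<in>B. pr ` set (Q b))"
    and ne: "C1 \<noteq> C2"
  from c1 obtain b1 i where b1: "b1 \<in> B" "i < length (Q b1)" "C1 = pr (Q b1 ! i)"
    by (auto simp: in_set_conv_nth)
  from c2 obtain b2 j where b2: "b2 \<in> B" "j < length (Q b2)" "C2 = pr (Q b2 ! j)"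
    by (auto simp: in_set_conv_nth)
  show "C1 \<inter> C2 = {}"
  proof (cases "b1 = b2")
    case True
    then show ?thesis using A2[of b1 i j] b1 b2 ne by auto
  next
    case False
    have "C1 \<subseteq> E b1" using A3[OF b1(1)] b1 nth_mem by fastforce
    moreover have "C2 \<subseteq> E b2" using A3[OF b2(1)] b2 nth_mem by fastforce
    ultimately show ?thesis using A4[OF b1(1) b2(1) False] by blast
  qed
next
  have "\<Union>(\<Union>b\<in>B. pr ` set (Q b)) = (\<Union>b\<in>B. \<Union>(pr ` set (Q b)))" by blast
  also have "\<dots> = (\<Union>b\<in>B. E b)" using A3 by simp
  finally have "\<Union>(\<Union>b\<in>B. pr ` set (Q b)) = (\<Union>b\<in>B. E b)" .
  then show "L = complete_edges X - \<Union>(\<Union>b\<in>B. pr ` set (Q b))" using A5 A6 by auto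
qed

lemma framework:
  fixes B :: "'i set" and Q :: "'i \<Rightarrow> ('a set set \<times> 'a set set) list"
    and E :: "'i \<Rightarrow> 'a set set"
  assumes A1: "\<And>b C D. b\<in>B \<Longrightarrow> (C,D) \<in> set (Q b) \<Longrightarrow>
      is_8cycle X C \<and> is_8cycle X D \<and> \<Union>D = \<Union>C \<and> C \<inter> D = {}"
  and A2: "\<And>b i j. b\<in>B \<Longrightarrow> i < length (Q b) \<Longrightarrow> j < length (Q b) \<Longrightarrow> i \<noteq> j
      \<Longrightarrow> fst (Q b!i) \<inter> fst (Q b!j) = {} \<and> snd (Q b!i) \<inter> snd (Q b!j) = {}"
  and A3: "\<And>b. b\<in>B \<Longrightarrow> \<Union>(fst ` set (Q b)) = E b \<and> \<Union>(snd ` set (Q b)) = E b"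
  and A4: "\<And>b b'. b\<in>B \<Longrightarrow> b'\<in>B \<Longrightarrow> b\<noteq>b' \<Longrightarrow> E b \<inter> E b' = {}"
  and A5: "(\<Union>b\<in>B. E b) = complete_edges X - L" and A6: "L \<subseteq> complete_edges X"
  shows "is_8cycle_packing X (\<Union>b\<in>B. fst ` set (Q b)) L \<and> almost_2_perfect X (\<Union>b\<in>B. fst ` set (Q b)) L"
proof -
  have P1: "is_8cycle_packing X (\<Union>b\<in>B. fst ` set (Q b)) L"
    by (rule framework_packing[where E=E]) (use A1 A2 A3 A4 A5 A6 in \<open>force+\<close>)
  have P2: "is_8cycle_packing X (\<Union>b\<in>B. snd ` set (Q b)) L"
    by (rule framework_packing[where E=E]) (use A1 A2 A3 A4 A5 A6 in \<open>force+\<close>)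
  define f where "f C = (SOME D. \<exists>b\<in>B. (C,D) \<in> set (Q b))" for C
  have key: "f C = D" if b: "b \<in> B" "(C,D) \<in> set (Q b)" for b C D
    unfolding f_def
  proof (rule some_equality)
    show "\<exists>b\<in>B. (C, D) \<in> set (Q b)" using b by blast
  next
    fix D' assume "\<exists>b\<in>B. (C, D') \<in> set (Q b)"
    then obtain b' where b': "b' \<in> B" "(C,D') \<in> set (Q b')" by blast
    have Cne: "C \<noteq> {}" using A1[OF b] is_8cycle_ne by blast
    have "C \<subseteq> E b" using A3[OF b(1)] b(2) by force
    moreover have "C \<subseteq> E b'" using A3[OF b'(1)] b'(2) by force
    ultimately have bb: "b' = b" using A4[OF b(1) b'(1)] Cne by blast
    from b(2) obtain i where i: "i < length (Q b)" "Q b ! i = (C,D)" by (auto simp: in_set_conv_nth)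
    from b'(2) bb obtain j where j: "j < length (Q b)" "Q b ! j = (C,D')" by (auto simp: in_set_conv_nth)
    have "i = j"
    proof (rule ccontr)
      assume "i \<noteq> j"
      then have "C \<inter> C = {}" using A2[OF b(1) i(1) j(1)] i j by auto
      then show False using Cne by blast
    qed
    then show "D' = D" using i j by simp
  qed
  have img: "f ` (\<Union>b\<in>B. fst ` set (Q b)) = (\<Union>b\<in>B. snd ` set (Q b))"
  proof -
    have "f ` (fst ` set (Q b)) = snd ` set (Q b)" if "b \<in> B" for b
    proof -
      have "f ` (fst ` set (Q b)) = (f \<circ> fst) ` set (Q b)" by (simp add: image_comp)
      also have "\<dots> = snd ` set (Q b)"
        by (rule image_cong) (use key[OF that] in auto)
      finally show ?thesis .
    qed
    then show ?thesis by (simp add: image_UN)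
  qed
  have ins: "\<forall>C\<in>(\<Union>b\<in>B. fst ` set (Q b)). inside_8cycle X C (f C)"
  proof
    fix C assume "C \<in> (\<Union>b\<in>B. fst ` set (Q b))"
    then obtain b D where b: "b \<in> B" "(C,D) \<in> set (Q b)" by force
    then show "inside_8cycle X C (f C)" using key[OF b] A1[OF b] unfolding inside_8cycle_def by auto
  qed
  show ?thesis unfolding almost_2_perfect_def
    by (intro conjI P1 exI[of _ f]) (use ins P2 img in auto)
qed

definition ce :: "nat list \<Rightarrow> nat set set" where
  "ce vs = set (map (\<lambda>i. {vs!i, vs!((i+1) mod length vs)}) [0..<length vs])"

lemma ce_eq: "ce = cycle_edges"
  by (rule ext) (simp add: ce_def cycle_edges_list)

definition tmpl_ok :: "nat \<Rightarrow> (nat list \<times> nat list) list \<Rightarrow> bool" where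
  "tmpl_ok N T \<longleftrightarrow>
    list_all (\<lambda>(v,w). length v = 8 \<and> distinct v \<and> list_all (\<lambda>x. x < N) v \<and>
       length w = 8 \<and> distinct w \<and> set w = set v \<and> ce v \<inter> ce w = {}) T \<and>
    list_all (\<lambda>i. list_all (\<lambda>j. i = j \<or> (ce (fst (T!i)) \<inter> ce (fst (T!j)) = {}
        \<and> ce (snd (T!i)) \<inter> ce (snd (T!j)) = {})) [0..<length T]) [0..<length T] \<and>
    foldr (\<union>) (map (ce \<circ> snd) T) {} = foldr (\<union>) (map (ce \<circ> fst) T) {}"

definition tE :: "(nat list \<times> nat list) list \<Rightarrow> nat set set" where
  "tE T = foldr (\<union>) (map (ce \<circ> fst) T) {}"

definition tq :: "(nat \<Rightarrow> 'a) \<Rightarrow> (nat list \<times> nat list) list \<Rightarrow> ('a set set \<times> 'a set set) list" where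
  "tq f T = map (\<lambda>(v,w). (cycle_edges (map f v), cycle_edges (map f w))) T"

lemma foldr_Un: "foldr (\<union>) xs {} = \<Union>(set xs)"
  by (induction xs) auto

lemma cycle_edges_Pow: "cycle_edges vs \<subseteq> Pow (set vs)"
proof -
  have "\<And>i. i < length vs \<Longrightarrow> (i+1) mod length vs < length vs"
    by (metis mod_less_divisor not_less_zero gr0I)
  then show ?thesis unfolding cycle_edges_def by auto
qed

lemma eimg_Int:
  assumes "inj_on f A" "C \<subseteq> Pow A" "D \<subseteq> Pow A"
  shows "eimg f C \<inter> eimg f D = eimg f (C \<inter> D)"
  unfolding eimg_def using inj_on_image_Int[OF inj_on_image_Pow[OF assms(1)] assms(2,3)] by simp

lemma tmpl_block:
  fixes f :: "nat \<Rightarrow> 'a"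
  assumes ok: "tmpl_ok N T" and inj: "inj_on f {..<N}" and sub: "f ` {..<N} \<subseteq> X"
  shows "\<And>C D. (C,D) \<in> set (tq f T) \<Longrightarrow> is_8cycle X C \<and> is_8cycle X D \<and> \<Union>D = \<Union>C \<and> C \<inter> D = {}"
    and "\<And>i j. i < length (tq f T) \<Longrightarrow> j < length (tq f T) \<Longrightarrow> i \<noteq> j \<Longrightarrow>
      fst (tq f T!i) \<inter> fst (tq f T!j) = {} \<and> snd (tq f T!i) \<inter> snd (tq f T!j) = {}"
    and "\<Union>(fst ` set (tq f T)) = eimg f (tE T) \<and> \<Union>(snd ` set (tq f T)) = eimg f (tE T)"
proof -
  have okv: "\<And>v w. (v,w) \<in> set T \<Longrightarrow> length v = 8 \<and> distinct v \<and> set v \<subseteq> {..<N} \<and>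
       length w = 8 \<and> distinct w \<and> set w = set v \<and> cycle_edges v \<inter> cycle_edges w = {}"
    using ok unfolding tmpl_ok_def list_all_iff ce_eq by fastforce
  have okd: "\<And>i j. i < length T \<Longrightarrow> j < length T \<Longrightarrow> i \<noteq> j \<Longrightarrow>
      cycle_edges (fst (T!i)) \<inter> cycle_edges (fst (T!j)) = {} \<and>
      cycle_edges (snd (T!i)) \<inter> cycle_edges (snd (T!j)) = {}"
  proof -
    fix i j assume ij: "i < length T" "j < length T" "i \<noteq> j"
    have "\<forall>i\<in>set [0..<length T]. \<forall>j\<in>set [0..<length T]. i = j \<or>
      (cycle_edges (fst (T!i)) \<inter> cycle_edges (fst (T!j)) = {} \<and>
      cycle_edges (snd (T!i)) \<inter> cycle_edges (snd (T!j)) = {})"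
      using ok unfolding tmpl_ok_def list_all_iff ce_eq by blast
    moreover have "i \<in> set [0..<length T]" "j \<in> set [0..<length T]" using ij by auto
    ultimately show "cycle_edges (fst (T!i)) \<inter> cycle_edges (fst (T!j)) = {} \<and>
      cycle_edges (snd (T!i)) \<inter> cycle_edges (snd (T!j)) = {}" using ij(3) by blast
  qed
  have oku: "\<Union>((cycle_edges \<circ> snd) ` set T) = \<Union>((cycle_edges \<circ> fst) ` set T)"
    using ok unfolding tmpl_ok_def foldr_Un ce_eq by simp
  have cyc: "is_8cycle X (cycle_edges (map f v))" if "length v = 8" "distinct v" "set v \<subseteq> {..<N}" for v
    unfolding is_8cycle_def
    using that inj sub by (intro exI[of _ "map f v"]) (auto simp: distinct_map intro: inj_on_subset)
  show "\<And>C D. (C,D) \<in> set (tq f T) \<Longrightarrow> is_8cycle X C \<and> is_8cycle X D \<and> \<Union>D = \<Union>C \<and> C \<inter> D = {}"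
  proof -
    fix C D assume "(C,D) \<in> set (tq f T)"
    then obtain v w where vw: "(v,w) \<in> set T" "C = cycle_edges (map f v)" "D = cycle_edges (map f w)"
      unfolding tq_def by auto
    note o = okv[OF vw(1)]
    have "map f v \<noteq> []" "map f w \<noteq> []" using o by auto
    then have "\<Union>D = \<Union>C" using o vw by (simp add: Union_cycle_edges)
    moreover have "C \<inter> D = {}"
    proof -
      have "C \<inter> D = eimg f (cycle_edges v \<inter> cycle_edges w)"
        unfolding vw cycle_edges_map
        by (rule eimg_Int[OF inj]) (use o cycle_edges_Pow[of v] cycle_edges_Pow[of w] in blast)+
      then show ?thesis using o by (simp add: eimg_def)
    qed
    ultimately show "is_8cycle X C \<and> is_8cycle X D \<and> \<Union>D = \<Union>C \<and> C \<inter> D = {}"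
      using cyc o vw by auto
  qed
  show "\<And>i j. i < length (tq f T) \<Longrightarrow> j < length (tq f T) \<Longrightarrow> i \<noteq> j \<Longrightarrow>
      fst (tq f T!i) \<inter> fst (tq f T!j) = {} \<and> snd (tq f T!i) \<inter> snd (tq f T!j) = {}"
  proof -
    fix i j assume ij: "i < length (tq f T)" "j < length (tq f T)" "i \<noteq> j"
    then have ij': "i < length T" "j < length T" unfolding tq_def by auto
    obtain vi wi where pi: "T!i = (vi,wi)" by fastforce
    obtain vj wj where pj: "T!j = (vj,wj)" by fastforce
    have oi: "set vi \<subseteq> {..<N}" "set wi \<subseteq> {..<N}" using okv[of vi wi] nth_mem[OF ij'(1)] pi by auto
    have oj: "set vj \<subseteq> {..<N}" "set wj \<subseteq> {..<N}" using okv[of vj wj] nth_mem[OF ij'(2)] pj by auto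
    have d: "cycle_edges vi \<inter> cycle_edges vj = {}" "cycle_edges wi \<inter> cycle_edges wj = {}"
      using okd[OF ij'(1,2) ij(3)] pi pj by auto
    have "fst (tq f T!i) \<inter> fst (tq f T!j) = eimg f (cycle_edges vi \<inter> cycle_edges vj)"
      unfolding tq_def using ij' pi pj
      by (simp add: cycle_edges_map)
        (rule eimg_Int[OF inj]; use oi oj cycle_edges_Pow[of vi] cycle_edges_Pow[of vj] in blast)
    moreover have "snd (tq f T!i) \<inter> snd (tq f T!j) = eimg f (cycle_edges wi \<inter> cycle_edges wj)"
      unfolding tq_def using ij' pi pj
      by (simp add: cycle_edges_map)
        (rule eimg_Int[OF inj]; use oi oj cycle_edges_Pow[of wi] cycle_edges_Pow[of wj] in blast)
    ultimately show "fst (tq f T!i) \<inter> fst (tq f T!j) = {} \<and> snd (tq f T!i) \<inter> snd (tq f T!j) = {}"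
      using d by (simp add: eimg_def)
  qed
  have e1: "\<Union>(fst ` set (tq f T)) = eimg f (tE T)"
    unfolding tq_def tE_def foldr_Un eimg_def
    by (auto simp: cycle_edges_map eimg_def ce_eq split: prod.splits) (metis UN_I fst_conv imageI)
  have e2: "\<Union>(snd ` set (tq f T)) = eimg f (\<Union>((cycle_edges \<circ> snd) ` set T))"
    unfolding tq_def eimg_def
    by (auto simp: cycle_edges_map eimg_def split: prod.splits) (metis UN_I snd_conv imageI)
  show "\<Union>(fst ` set (tq f T)) = eimg f (tE T) \<and> \<Union>(snd ` set (tq f T)) = eimg f (tE T)"
    using e1 e2 oku by (simp add: tE_def foldr_Un ce_eq)
qed



definition T8 :: "(nat list \<times> nat list) list" where
  "T8 = [([0,2,1,3,4,6,5,7],[0,3,5,1,6,2,7,4]), ([0,3,5,1,6,2,7,4],[0,5,2,4,1,7,3,6]),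
         ([0,5,2,4,1,7,3,6],[0,2,1,3,4,6,5,7])]"
definition T44 :: "(nat list \<times> nat list) list" where
  "T44 = [([0,4,1,5,2,6,3,7],[0,5,3,4,2,7,1,6]), ([0,5,3,4,2,7,1,6],[0,4,1,5,2,6,3,7])]"
definition T10 :: "(nat list \<times> nat list) list" where
  "T10 = [([0, 6, 8, 4, 7, 3, 5, 2], [0, 4, 2, 6, 3, 8, 7, 5]),
          ([0, 3, 8, 5, 9, 1, 6, 4], [0, 8, 6, 5, 1, 4, 3, 9]),
          ([0, 5, 1, 3, 4, 2, 7, 9], [0, 3, 5, 2, 1, 9, 4, 7]),
          ([0, 8, 1, 2, 9, 6, 5, 7], [0, 6, 1, 7, 9, 5, 8, 2]),
          ([1, 4, 9, 3, 6, 2, 8, 7], [1, 8, 4, 6, 9, 2, 7, 3])]"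

lemma T8_ok: "tmpl_ok 8 T8" unfolding T8_def by code_simp
lemma T44_ok: "tmpl_ok 8 T44" unfolding T44_def by code_simp
lemma T10_ok: "tmpl_ok 10 T10" unfolding T10_def by code_simp

lemma setcomp1: "set [ {x,y}. x <- [0..<N], y <- [0..<N], x<y, P x y] = {{x,y}| x y. x < y \<and> y < N \<and> P x y}"
  by (auto simp: set_concat) (blast, force)



lemma T8_E': "tE T8 = set [ {x,y}. x <- [0..<8], y <- [0..<8], x<y \<and> x div 2 \<noteq> y div 2]"
  unfolding T8_def tE_def by code_simp
lemma T10_E': "tE T10 = set [ {x,y}. x <- [0..<10], y <- [0..<10], x<y \<and> x div 2 \<noteq> y div 2]"
  unfolding T10_def tE_def by code_simp
lemma T44_E': "tE T44 = set [ {x,y}. x <- [0..<8], y <- [0..<8], x<4 \<and> 4 \<le> y]"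
  unfolding T44_def tE_def by code_simp


lemma eimg_comp: "eimg f {{x,y}|x y. P x y} = {{f x, f y}|x y. P x y}"
  unfolding eimg_def by (auto simp: image_iff) (metis image_empty image_insert)

lemma d8: "x < 8 \<Longrightarrow> (8*i + x) div 8 = (i::nat)" by simp
lemma d2: "(8*i + x) div 2 = 4*i + (x::nat) div 2" by simp
lemma d4: "x < 4 \<Longrightarrow> (4*i + x) div 4 = (i::nat)" by simp

lemma setcomp: "set [ {x,y}. x <- [0..<N], y <- [0..<N], P x y] = {{x,y}| x y. x < N \<and> y < N \<and> P x y}"
  by (auto simp: set_concat) (blast, force)

lemma charW:
  fixes n m r i :: nat
  assumes n: "n = 8*m + r" and r: "r = 0 \<or> r = 2" and i: "i < m"
  shows "{{(\<lambda>x. if x < 8 then 8*i+x else 8*m+x-8) x, (\<lambda>x. if x < 8 then 8*i+x else 8*m+x-8) y}|x y.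
            x < 8+r \<and> y < 8+r \<and> x < y \<and> x div 2 \<noteq> y div 2}
       = {{u,v}|u v. u<v \<and> v<n \<and> u div 8 = i \<and> (v div 8 = i \<or> 8*m \<le> v) \<and> u div 2 \<noteq> v div 2}"
    (is "?L = ?R")
proof (intro set_eqI iffI)
  have im: "8*i + 8 \<le> 8*m" using i by simp
  fix e assume "e \<in> ?L"
  then obtain x y where xy: "e = {(if x < 8 then 8*i+x else 8*m+x-8), (if y < 8 then 8*i+y else 8*m+y-8)}"
    "x < 8+r" "y < 8+r" "x < y" "x div 2 \<noteq> y div 2" by blast
  show "e \<in> ?R"
  proof (cases "y < 8")
    case True
    then have x8: "x < 8" using xy by simp
    have "e = {8*i+x, 8*i+y}" using xy x8 True by simp
    moreover have "8*i+x < 8*i+y" "8*i+y < n" using xy im n True by auto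
    moreover have "(8*i+x) div 8 = i" "(8*i+y) div 8 = i" using x8 True by (simp_all only: d8)
    moreover have "(8*i+x) div 2 \<noteq> (8*i+y) div 2" using xy(5) by (simp add: d2)
    ultimately show ?thesis by blast
  next
    case False
    then have y: "y = 8 \<or> y = 9" "r = 2" using xy r by auto
    then have x8: "x < 8" using xy by auto
    have "e = {8*i+x, 8*m+y-8}" using xy x8 False by simp
    moreover have "8*i+x < 8*m+y-8" "8*m+y-8 < n" "8*m \<le> 8*m+y-8" using xy im n y by auto
    moreover have "(8*i+x) div 8 = i" using x8 by (simp only: d8)
    moreover have "(8*i+x) div 2 \<noteq> (8*m+y-8) div 2"
    proof -
      have "(8*i+x) div 2 \<le> 4*i+3" using x8 by (simp add: d2)
      moreover have "(8*m+y-8) div 2 \<ge> 4*m" using y by auto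
      ultimately show ?thesis using i by auto
    qed
    ultimately show ?thesis by blast
  qed
next
  fix e assume "e \<in> ?R"
  then obtain u v where uv: "e = {u,v}" "u<v" "v<n" "u div 8 = i" "v div 8 = i \<or> 8*m \<le> v"
    "u div 2 \<noteq> v div 2" by blast
  define x where "x = u - 8*i"
  have ux: "u = 8*i + x" "x < 8" using uv(4) unfolding x_def by auto
  show "e \<in> ?L"
  proof (cases "v div 8 = i")
    case True
    define y where "y = v - 8*i"
    have vy: "v = 8*i + y" "y < 8" using True unfolding y_def by auto
    have "x < y" "x div 2 \<noteq> y div 2" using uv(2,6) ux vy by (auto simp only: d2)
    then show ?thesis using ux vy uv(1) by (intro CollectI exI[of _ x] exI[of _ y]) auto
  next
    case False
    then have v: "8*m \<le> v" using uv by simp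
    define y where "y = v - 8*m + 8"
    have vy: "v = 8*m + y - 8" "8 \<le> y" "y < 8+r" using v uv(3) n unfolding y_def by auto
    have "x div 2 < 4" using ux by simp
    moreover have "y div 2 \<ge> 4" using vy by simp
    ultimately have "x div 2 \<noteq> y div 2" by simp
    then show ?thesis using ux vy uv(1) by (intro CollectI exI[of _ x] exI[of _ y]) auto
  qed
qed

lemma charX:
  fixes p q :: nat
  assumes pq: "p < q"
  shows "{{(\<lambda>x. if x < 4 then 4*p+x else 4*q+x-4) x, (\<lambda>x. if x < 4 then 4*p+x else 4*q+x-4) y}|x y.
            x < 8 \<and> y < 8 \<and> x < 4 \<and> 4 \<le> y}
       = {{u,v}|u v. u div 4 = p \<and> v div 4 = q}"
    (is "?L = ?R")
proof (intro set_eqI iffI)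
  fix e assume "e \<in> ?L"
  then obtain x y where xy: "e = {(if x < 4 then 4*p+x else 4*q+x-4), (if y < 4 then 4*p+y else 4*q+y-4)}"
    "x < 8" "y < 8" "x < 4" "4 \<le> y" by blast
  have "e = {4*p+x, 4*q+(y-4)}" using xy by simp
  moreover have "(4*p+x) div 4 = p" "(4*q+(y-4)) div 4 = q" using xy by (simp_all only: d4)
  ultimately show "e \<in> ?R" by blast
next
  fix e assume "e \<in> ?R"
  then obtain u v where uv: "e = {u,v}" "u div 4 = p" "v div 4 = q" by blast
  define x where "x = u - 4*p"
  define y where "y = v - 4*q + 4"
  have "u = 4*p + x" "x < 4" using uv(2) unfolding x_def by auto
  moreover have "v = 4*q + y - 4" "4 \<le> y" "y < 8" using uv(3) unfolding y_def by auto
  ultimately show "e \<in> ?L" using uv(1) by (intro CollectI exI[of _ x] exI[of _ y]) auto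
qed



lemma cyc8_list: "cycle_edges [a0,a1,a2,a3,a4,a5,a6,a7] =
   set [{a0,a1},{a1,a2},{a2,a3},{a3,a4},{a4,a5},{a5,a6},{a6,a7},{a7,a0}]"
  by (simp add: cycle_edges_list upt_rec)

lemma len8: "length vs = 8 \<Longrightarrow> vs = [vs!0,vs!1,vs!2,vs!3,vs!4,vs!5,vs!6,vs!7]"
  by (rule nth_equalityI) (auto simp: less_Suc_eq numeral_eq_Suc nth_Cons')

lemma cyc8_deg:
  assumes d: "distinct [a0,a1,a2,a3,a4,a5,a6,a7]"
  shows "even (card {e \<in> cycle_edges [a0,a1,a2,a3,a4,a5,a6,a7]. v \<in> e})"
proof -
  let ?xs = "[{a0,a1},{a1,a2},{a2,a3},{a3,a4},{a4,a5},{a5,a6},{a6,a7},{a7,a0}]"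
  have eq: "{e \<in> cycle_edges [a0,a1,a2,a3,a4,a5,a6,a7]. v \<in> e} = set (filter (\<lambda>e. v \<in> e) ?xs)"
    by (simp only: cyc8_list set_filter)
  have dx: "distinct ?xs" using d by (auto simp: doubleton_eq_iff)
  have c: "card {e \<in> cycle_edges [a0,a1,a2,a3,a4,a5,a6,a7]. v \<in> e} = length (filter (\<lambda>e. v \<in> e) ?xs)"
    unfolding eq by (rule distinct_card[OF distinct_filter[OF dx]])
  consider "v = a0" | "v = a1" | "v = a2" | "v = a3" | "v = a4" | "v = a5" | "v = a6" | "v = a7"
    | "v \<notin> {a0,a1,a2,a3,a4,a5,a6,a7}" by blast
  then show ?thesis unfolding c using d by cases auto
qed

lemma is_8cycle_deg: "is_8cycle X C \<Longrightarrow> even (card {e \<in> C. v \<in> e})"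
proof -
  assume "is_8cycle X C"
  then obtain vs where vs: "length vs = 8" "distinct vs" "C = cycle_edges vs" unfolding is_8cycle_def by blast
  have e: "vs = [vs!0,vs!1,vs!2,vs!3,vs!4,vs!5,vs!6,vs!7]" using vs(1) by (rule len8)
  have d: "distinct [vs!0,vs!1,vs!2,vs!3,vs!4,vs!5,vs!6,vs!7]" unfolding e[symmetric] by (rule vs(2))
  have "C = cycle_edges [vs!0,vs!1,vs!2,vs!3,vs!4,vs!5,vs!6,vs!7]" unfolding e[symmetric] by (rule vs(3))
  then show ?thesis using cyc8_deg[OF d] by simp
qed

lemma finite_complete: "finite X \<Longrightarrow> finite (complete_edges X)"
  unfolding complete_edges_def by (rule finite_subset[of _ "Pow X"]) auto

lemma leave_covers:
  fixes n :: nat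
  assumes P: "is_8cycle_packing {..<n} Cs L" and ev: "even n" and v: "v < n"
  shows "\<exists>e\<in>L. v \<in> e"
proof (rule ccontr)
  assume no: "\<not> (\<exists>e\<in>L. v \<in> e)"
  let ?K = "complete_edges {..<n}"
  let ?S = "{e \<in> ?K. v \<in> e}"
  have cyc: "\<And>C. C \<in> Cs \<Longrightarrow> is_8cycle {..<n} C" and dis: "\<forall>C1\<in>Cs. \<forall>C2\<in>Cs. C1 \<noteq> C2 \<longrightarrow> C1 \<inter> C2 = {}"
    and Ldef: "L = ?K - \<Union>Cs" using P unfolding is_8cycle_packing_def by auto
  have fK: "finite ?K" by (simp add: finite_complete)
  have CsK: "Cs \<subseteq> Pow ?K" using cyc is_8cycle_sub by blast
  then have fCs: "finite Cs" using fK by (meson finite_Pow_iff finite_subset)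
  have "?S = (\<Union>C\<in>Cs. {e \<in> C. v \<in> e})"
  proof
    show "?S \<subseteq> (\<Union>C\<in>Cs. {e \<in> C. v \<in> e})" using no Ldef by blast
    show "(\<Union>C\<in>Cs. {e \<in> C. v \<in> e}) \<subseteq> ?S" using CsK by blast
  qed
  moreover have "card (\<Union>C\<in>Cs. {e\<in>C. v\<in>e}) = (\<Sum>C\<in>Cs. card {e\<in>C. v\<in>e})"
  proof (rule card_UN_disjoint[OF fCs])
    show "\<forall>C\<in>Cs. finite {e\<in>C. v\<in>e}"
    proof
      fix C assume "C \<in> Cs"
      then have "{e\<in>C. v\<in>e} \<subseteq> ?K" using CsK by blast
      then show "finite {e\<in>C. v\<in>e}" using fK by (rule finite_subset)
    qed
    show "\<forall>i\<in>Cs. \<forall>j\<in>Cs. i \<noteq> j \<longrightarrow> {e\<in>i. v\<in>e} \<inter> {e\<in>j. v\<in>e} = {}" using dis by blast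
  qed
  ultimately have cS: "card ?S = (\<Sum>C\<in>Cs. card {e \<in> C. v \<in> e})" by (simp only:)
  have evC: "\<forall>C\<in>Cs. even (card {e\<in>C. v\<in>e})"
  proof
    fix C assume "C \<in> Cs"
    then show "even (card {e\<in>C. v\<in>e})" by (rule is_8cycle_deg[OF cyc])
  qed
  have evS: "even (card ?S)" unfolding cS by (rule dvd_sum) (use evC in blast)
  have "?S = (\<lambda>u. {u,v}) ` ({..<n} - {v})"
  proof
    show "?S \<subseteq> (\<lambda>u. {u,v}) ` ({..<n} - {v})"
    proof
      fix e assume "e \<in> ?S"
      then have e: "card e = 2" "e \<subseteq> {..<n}" "v \<in> e" unfolding complete_edges_def by auto
      then obtain x y where xy: "e = {x,y}" "x \<noteq> y" by (auto simp: card_2_iff)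
      show "e \<in> (\<lambda>u. {u,v}) ` ({..<n} - {v})"
      proof (cases "v = x")
        case True
        then have "e = {y,v}" "y \<in> {..<n} - {v}" using xy e by auto
        then show ?thesis by blast
      next
        case False
        then have "v = y" using xy e by auto
        then have "e = {x,v}" "x \<in> {..<n} - {v}" using xy e by auto
        then show ?thesis by blast
      qed
    qed
    show "(\<lambda>u. {u,v}) ` ({..<n} - {v}) \<subseteq> ?S" using v unfolding complete_edges_def by auto
  qed
  moreover have "inj_on (\<lambda>u. {u,v}) ({..<n} - {v})" by (auto simp: inj_on_def doubleton_eq_iff)
  ultimately have "card ?S = n - 1" using v by (simp add: card_image)
  then show False using evS ev v by auto
qed

lemma leave_bound:
  fixes n :: nat
  assumes P: "is_8cycle_packing {..<n} Cs L" and ev: "even n"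
  shows "n \<le> 2 * card L"
proof -
  have LK: "L \<subseteq> complete_edges {..<n}" using P unfolding is_8cycle_packing_def by auto
  have fL: "finite L" using finite_subset[OF LK finite_complete] by simp
  have "{..<n} \<subseteq> \<Union>L" using leave_covers[OF P ev] by blast
  moreover have "\<Union>L \<subseteq> {..<n}" using LK unfolding complete_edges_def by blast
  ultimately have "card {..<n} \<le> card (\<Union>L)"
    by (intro card_mono) (auto intro: finite_subset)
  then have "n \<le> card (\<Union>L)" by simp
  also have "\<dots> \<le> sum card L" by (rule card_Union_le_sum_card)
  also have "\<dots> = sum (\<lambda>_. 2) L" using LK unfolding complete_edges_def by (intro sum.cong) auto
  finally show ?thesis by simp
qed



lemma complete_nat: "complete_edges {..<n::nat} = {{u,v}|u v. u<v \<and> v<n}"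
proof (intro set_eqI iffI)
  fix e assume "e \<in> complete_edges {..<n}"
  then have e: "card e = 2" "e \<subseteq> {..<n}" unfolding complete_edges_def by auto
  then obtain x y where xy: "e = {x,y}" "x \<noteq> y" by (auto simp: card_2_iff)
  show "e \<in> {{u,v}|u v. u<v \<and> v<n}"
  proof (cases "x < y")
    case True then show ?thesis using xy e by blast
  next
    case False then have "y < x" using xy by simp
    then show ?thesis using xy e by (auto simp: insert_commute)
  qed
next
  fix e assume "e \<in> {{u,v}|u v. u<v \<and> v<n}"
  then show "e \<in> complete_edges {..<n}" unfolding complete_edges_def by auto
qed

lemma edge_eq: "(u::nat) < v \<Longrightarrow> u' < v' \<Longrightarrow> {u,v} = {u',v'} \<Longrightarrow> u = u' \<and> v = v'"
  by (auto simp: doubleton_eq_iff)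

lemma card_leave:
  fixes n :: nat assumes "even n"
  shows "card {{u,v}|u v. u<v \<and> v<n \<and> u div 2 = v div 2} = n div 2"
proof -
  have "{{u,v}|u v. u<v \<and> v<n \<and> u div 2 = v div 2} = (\<lambda>k. {2*k, 2*k+1}) ` {..<n div 2}"
  proof (intro set_eqI iffI)
    fix e assume "e \<in> {{u,v}|u v. u<v \<and> v<n \<and> u div 2 = v div 2}"
    then obtain u v where uv: "e = {u,v}" "u<v" "v<n" "u div 2 = v div 2" by blast
    define k where "k = u div 2"
    have a: "u = 2*k" unfolding k_def using uv(2,4) by presburger
    have b: "v = 2*k + 1" unfolding k_def using uv(2,4) by presburger
    have "2*k+1 < n" using b uv(3) by simp
    then have c: "k < n div 2" by presburger
    have "e = {2*k, 2*k+1}" using uv(1) a b by simp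
    then show "e \<in> (\<lambda>k. {2*k, 2*k+1}) ` {..<n div 2}" using c by blast
  next
    fix e assume "e \<in> (\<lambda>k. {2*k, 2*k+1}) ` {..<n div 2}"
    then obtain k where k: "e = {2*k, 2*k+1}" "k < n div 2" by blast
    have "2*k+1 < n" using k(2) assms by presburger
    moreover have "(2*k) div 2 = (2*k+1) div 2" by simp
    moreover have "2*k < 2*k+1" by simp
    ultimately show "e \<in> {{u,v}|u v. u<v \<and> v<n \<and> u div 2 = v div 2}" using k by blast
  qed
  moreover have "inj_on (\<lambda>k::nat. {2*k, 2*k+1}) {..<n div 2}"
    by (auto simp: inj_on_def doubleton_eq_iff)
  ultimately show ?thesis by (simp add: card_image)
qed



definition EWb :: "nat \<Rightarrow> nat \<Rightarrow> nat \<Rightarrow> nat set set" where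
  "EWb n m i = {{u,v}|u v. u<v \<and> v<n \<and> u div 8 = i \<and> (v div 8 = i \<or> 8*m \<le> v) \<and> u div 2 \<noteq> v div 2}"

definition EXb :: "nat \<Rightarrow> nat \<Rightarrow> nat set set" where
  "EXb p q = {{u,v}|u v. u div 4 = p \<and> v div 4 = q}"

definition TW :: "nat \<Rightarrow> (nat list \<times> nat list) list" where
  "TW r = (if r = 0 then T8 else T10)"

definition phW :: "nat \<Rightarrow> nat \<Rightarrow> nat \<Rightarrow> nat" where
  "phW m i = (\<lambda>x. if x < 8 then 8*i+x else 8*m+x-8)"

definition phX :: "nat \<Rightarrow> nat \<Rightarrow> nat \<Rightarrow> nat" where
  "phX p q = (\<lambda>x. if x < 4 then 4*p+x else 4*q+x-4)"

lemma T8_E: "tE T8 = {{x,y}|x y. x < 8 \<and> y < 8 \<and> x < y \<and> x div 2 \<noteq> y div 2}"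
  by (simp only: T8_E' setcomp)
lemma T10_E: "tE T10 = {{x,y}|x y. x < 10 \<and> y < 10 \<and> x < y \<and> x div 2 \<noteq> y div 2}"
  by (simp only: T10_E' setcomp)
lemma T44_E: "tE T44 = {{x,y}|x y. x < 8 \<and> y < 8 \<and> x < 4 \<and> 4 \<le> y}"
  by (simp only: T44_E' setcomp)

lemma blockW:
  fixes n m r i :: nat
  assumes n: "n = 8*m + r" and r: "r = 0 \<or> r = 2" and i: "i < m"
  shows "\<And>C D. (C,D) \<in> set (tq (phW m i) (TW r)) \<Longrightarrow>
           is_8cycle {..<n} C \<and> is_8cycle {..<n} D \<and> \<Union>D = \<Union>C \<and> C \<inter> D = {}"
    and "\<And>a b. a < length (tq (phW m i) (TW r)) \<Longrightarrow> b < length (tq (phW m i) (TW r)) \<Longrightarrow> a \<noteq> b \<Longrightarrow>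
      fst (tq (phW m i) (TW r)!a) \<inter> fst (tq (phW m i) (TW r)!b) = {} \<and>
      snd (tq (phW m i) (TW r)!a) \<inter> snd (tq (phW m i) (TW r)!b) = {}"
    and "\<Union>(fst ` set (tq (phW m i) (TW r))) = EWb n m i \<and> \<Union>(snd ` set (tq (phW m i) (TW r))) = EWb n m i"
proof -
  have ok: "tmpl_ok (8+r) (TW r)" using r T8_ok T10_ok by (auto simp: TW_def)
  have im: "8*i + 8 \<le> 8*m" using i by simp
  have inj: "inj_on (phW m i) {..<8+r}" unfolding phW_def inj_on_def using im by auto
  have sub: "phW m i ` {..<8+r} \<subseteq> {..<n}" unfolding phW_def using im n by auto
  have tE: "tE (TW r) = {{x,y}|x y. x < 8+r \<and> y < 8+r \<and> x < y \<and> x div 2 \<noteq> y div 2}"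
    using r
  proof
    assume "r = 0" then show ?thesis by (simp add: TW_def T8_E)
  next
    assume "r = 2" then show ?thesis by (simp add: TW_def T10_E)
  qed
  have E: "eimg (phW m i) (tE (TW r)) = EWb n m i"
    unfolding tE eimg_comp EWb_def phW_def by (rule charW[OF n r i])
  note tb = tmpl_block[OF ok inj sub]
  show "\<And>C D. (C,D) \<in> set (tq (phW m i) (TW r)) \<Longrightarrow>
           is_8cycle {..<n} C \<and> is_8cycle {..<n} D \<and> \<Union>D = \<Union>C \<and> C \<inter> D = {}" by (rule tb(1))
  show "\<And>a b. a < length (tq (phW m i) (TW r)) \<Longrightarrow> b < length (tq (phW m i) (TW r)) \<Longrightarrow> a \<noteq> b \<Longrightarrow>
      fst (tq (phW m i) (TW r)!a) \<inter> fst (tq (phW m i) (TW r)!b) = {} \<and>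
      snd (tq (phW m i) (TW r)!a) \<inter> snd (tq (phW m i) (TW r)!b) = {}" by (rule tb(2))
  show "\<Union>(fst ` set (tq (phW m i) (TW r))) = EWb n m i \<and> \<Union>(snd ` set (tq (phW m i) (TW r))) = EWb n m i"
    using tb(3) E by simp
qed

lemma blockX:
  fixes n m p q :: nat
  assumes n: "8*m \<le> n" and pq: "p < q" "q < 2*m"
  shows "\<And>C D. (C,D) \<in> set (tq (phX p q) T44) \<Longrightarrow>
           is_8cycle {..<n} C \<and> is_8cycle {..<n} D \<and> \<Union>D = \<Union>C \<and> C \<inter> D = {}"
    and "\<And>a b. a < length (tq (phX p q) T44) \<Longrightarrow> b < length (tq (phX p q) T44) \<Longrightarrow> a \<noteq> b \<Longrightarrow>
      fst (tq (phX p q) T44!a) \<inter> fst (tq (phX p q) T44!b) = {} \<and>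
      snd (tq (phX p q) T44!a) \<inter> snd (tq (phX p q) T44!b) = {}"
    and "\<Union>(fst ` set (tq (phX p q) T44)) = EXb p q \<and> \<Union>(snd ` set (tq (phX p q) T44)) = EXb p q"
proof -
  have pq4: "4*p + 4 \<le> 4*q" "4*q + 4 \<le> n" using pq n by auto
  have inj: "inj_on (phX p q) {..<8}" unfolding phX_def inj_on_def using pq4 by auto
  have sub: "phX p q ` {..<8} \<subseteq> {..<n}" unfolding phX_def using pq4 by auto
  have tE: "tE T44 = {{x,y}|x y. x < 8 \<and> y < 8 \<and> x < 4 \<and> 4 \<le> y}"
    by (rule T44_E)
  have E: "eimg (phX p q) (tE T44) = EXb p q"
    unfolding tE eimg_comp EXb_def phX_def by (rule charX[OF pq(1)])
  note tb = tmpl_block[OF T44_ok inj sub]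
  show "\<And>C D. (C,D) \<in> set (tq (phX p q) T44) \<Longrightarrow>
           is_8cycle {..<n} C \<and> is_8cycle {..<n} D \<and> \<Union>D = \<Union>C \<and> C \<inter> D = {}" by (rule tb(1))
  show "\<And>a b. a < length (tq (phX p q) T44) \<Longrightarrow> b < length (tq (phX p q) T44) \<Longrightarrow> a \<noteq> b \<Longrightarrow>
      fst (tq (phX p q) T44!a) \<inter> fst (tq (phX p q) T44!b) = {} \<and>
      snd (tq (phX p q) T44!a) \<inter> snd (tq (phX p q) T44!b) = {}" by (rule tb(2))
  show "\<Union>(fst ` set (tq (phX p q) T44)) = EXb p q \<and> \<Union>(snd ` set (tq (phX p q) T44)) = EXb p q"
    using tb(3) E by simp
qed

lemma div_less_imp: "(u::nat) div k < v div k \<Longrightarrow> u < v"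
  by (metis div_le_mono not_less)

lemma EW_EW: "i \<noteq> j \<Longrightarrow> EWb n m i \<inter> EWb n m j = {}"
  unfolding EWb_def by (auto dest: edge_eq)

lemma EX_EX: "p < q \<Longrightarrow> p' < q' \<Longrightarrow> (p,q) \<noteq> (p',q') \<Longrightarrow> EXb p q \<inter> EXb p' q' = {}"
proof (rule ccontr)
  assume a: "p < q" "p' < q'" "(p,q) \<noteq> (p',q')" and "EXb p q \<inter> EXb p' q' \<noteq> {}"
  then obtain u v u' v' where e: "{u,v} = {u',v'}" "u div 4 = p" "v div 4 = q" "u' div 4 = p'" "v' div 4 = q'"
    unfolding EXb_def by blast
  have "u < v" "u' < v'" using e a div_less_imp by metis+
  then have "u = u' \<and> v = v'" using edge_eq e(1) by blast
  then show False using e a by auto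
qed

lemma EW_EX:
  assumes "p < q" "q < 2*m" "p div 2 \<noteq> q div 2"
  shows "EWb n m i \<inter> EXb p q = {}"
proof (rule ccontr)
  assume "EWb n m i \<inter> EXb p q \<noteq> {}"
  then obtain u v u' v' where e: "{u,v} = {u',v'}" "u<v" "u div 8 = i" "v div 8 = i \<or> 8*m \<le> v"
    "u' div 4 = p" "v' div 4 = q"
    unfolding EXb_def EWb_def by blast
  have "u' < v'" using e assms div_less_imp by metis
  then have uv: "u = u'" "v = v'" using edge_eq e(1,2) by blast+
  have "v < 8*m" using e(6) assms(2) uv by linarith
  then have "v div 8 = i" using e(4) by simp
  moreover have "u div 8 = p div 2" "v div 8 = q div 2" using e(5,6) uv by (simp_all add: div_mult2_eq[of _ 4 2, simplified])
  ultimately show False using e(3) assms(3) by simp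
qed

lemma EW_sub:
  assumes n: "n = 8*m + r" "r = 0 \<or> r = 2"
  shows "EWb n m i \<subseteq> {{u,v}|u v. u<v \<and> v<n \<and> u div 2 \<noteq> v div 2}"
  unfolding EWb_def by blast

lemma EX_sub:
  assumes n: "n = 8*m + r" and pq: "p < q" "q < 2*m" "p div 2 \<noteq> q div 2"
  shows "EXb p q \<subseteq> {{u,v}|u v. u<v \<and> v<n \<and> u div 2 \<noteq> v div 2}"
proof
  fix e assume "e \<in> EXb p q"
  then obtain u v where e: "e = {u,v}" "u div 4 = p" "v div 4 = q" unfolding EXb_def by blast
  have "u < v" using e pq div_less_imp by metis
  moreover have "v < n" using e(3) pq(2) n by linarith
  moreover have "u div 2 \<noteq> v div 2"
  proof
    assume "u div 2 = v div 2"
    then have "u div 2 div 2 = v div 2 div 2" by simp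
    then show False using e pq(1) by (simp add: div_mult2_eq[symmetric])
  qed
  ultimately show "e \<in> {{u,v}|u v. u<v \<and> v<n \<and> u div 2 \<noteq> v div 2}" using e(1) by blast
qed

lemma cover:
  assumes n: "n = 8*m + r" and r: "r = 0 \<or> r = 2"
    and e: "e \<in> {{u,v}|u v. u<v \<and> v<n \<and> u div 2 \<noteq> v div 2}"
  shows "(\<exists>i<m. e \<in> EWb n m i) \<or> (\<exists>p q. p < q \<and> q < 2*m \<and> p div 2 \<noteq> q div 2 \<and> e \<in> EXb p q)"
proof -
  obtain u v where uv: "e = {u,v}" "u<v" "v<n" "u div 2 \<noteq> v div 2" using e by blast
  have u8: "u < 8*m"
  proof (rule ccontr)
    assume "\<not> u < 8*m"
    then have "u div 2 = 4*m" "v div 2 = 4*m" using uv n r by auto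
    then show False using uv by simp
  qed
  show ?thesis
  proof (cases "v div 8 = u div 8 \<or> 8*m \<le> v")
    case True
    have "u div 8 < m" using u8 by (simp add: div_less_iff_less_mult)
    moreover have "e \<in> EWb n m (u div 8)" unfolding EWb_def using uv True by blast
    ultimately show ?thesis by blast
  next
    case False
    then have v8: "v < 8*m" "u div 8 \<noteq> v div 8" by auto
    have "u div 8 \<le> v div 8" using uv by (simp add: div_le_mono)
    then have lt8: "u div 8 < v div 8" using v8 by simp
    have "u div 4 div 2 < v div 4 div 2" using lt8 by (simp add: div_mult2_eq[symmetric])
    then have "u div 4 < v div 4" by (metis div_le_mono not_less)
    moreover have "v div 4 < 2*m" using v8 by (simp add: div_less_iff_less_mult)
    moreover have "u div 4 div 2 \<noteq> v div 4 div 2" using lt8 by (simp add: div_mult2_eq[symmetric])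
    moreover have "e \<in> EXb (u div 4) (v div 4)" unfolding EXb_def using uv by blast
    ultimately show ?thesis by blast
  qed
qed

definition Lv :: "nat \<Rightarrow> nat set set" where
  "Lv n = {{u,v}|u v. u<v \<and> v<n \<and> u div 2 = v div 2}"

lemma compl_minus: "complete_edges {..<n} - Lv n = {{u,v}|u v. u<v \<and> v<n \<and> u div 2 \<noteq> v div 2}"
  unfolding complete_nat Lv_def by (auto dest: edge_eq)

lemma Lv_sub: "Lv n \<subseteq> complete_edges {..<n}"
  unfolding complete_nat Lv_def by blast

lemma construction:
  fixes n m r :: nat
  assumes n: "n = 8*m + r" and r: "r = 0 \<or> r = 2"
  shows "\<exists>Cs. is_8cycle_packing {..<n} Cs (Lv n) \<and> almost_2_perfect {..<n} Cs (Lv n)"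
proof -
  define XI where "XI = {(p,q). p<q \<and> q<2*m \<and> p div 2 \<noteq> (q::nat) div 2}"
  define B :: "(nat + nat\<times>nat) set" where "B = Inl ` {..<m} \<union> Inr ` XI"
  define Q where "Q b = (case b of Inl i \<Rightarrow> tq (phW m i) (TW r) | Inr pq \<Rightarrow> tq (phX (fst pq) (snd pq)) T44)" for b
  define E where "E b = (case b of Inl i \<Rightarrow> EWb n m i | Inr pq \<Rightarrow> EXb (fst pq) (snd pq))" for b
  have nm: "8*m \<le> n" using n by simp
  have "is_8cycle_packing {..<n} (\<Union>b\<in>B. fst ` set (Q b)) (Lv n) \<and>
        almost_2_perfect {..<n} (\<Union>b\<in>B. fst ` set (Q b)) (Lv n)"
  proof (rule framework[where E=E])
    fix b C D assume b: "b \<in> B" and cd: "(C,D) \<in> set (Q b)"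
    show "is_8cycle {..<n} C \<and> is_8cycle {..<n} D \<and> \<Union>D = \<Union>C \<and> C \<inter> D = {}"
    proof (cases b)
      case (Inl i)
      then have "i < m" using b unfolding B_def by auto
      then show ?thesis using blockW(1)[OF n r] cd Inl unfolding Q_def by auto
    next
      case (Inr pq)
      then have "fst pq < snd pq" "snd pq < 2*m" using b unfolding B_def XI_def by auto
      then show ?thesis using blockX(1)[OF nm] cd Inr unfolding Q_def by auto
    qed
  next
    fix b i j assume b: "b \<in> B" and ij: "i < length (Q b)" "j < length (Q b)" "i \<noteq> j"
    show "fst (Q b!i) \<inter> fst (Q b!j) = {} \<and> snd (Q b!i) \<inter> snd (Q b!j) = {}"
    proof (cases b)
      case (Inl k)
      then have "k < m" using b unfolding B_def by auto
      then show ?thesis using blockW(2)[OF n r] ij Inl unfolding Q_def by auto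
    next
      case (Inr pq)
      then have "fst pq < snd pq" "snd pq < 2*m" using b unfolding B_def XI_def by auto
      then show ?thesis using blockX(2)[OF nm] ij Inr unfolding Q_def by auto
    qed
  next
    fix b assume b: "b \<in> B"
    show "\<Union>(fst ` set (Q b)) = E b \<and> \<Union>(snd ` set (Q b)) = E b"
    proof (cases b)
      case (Inl k)
      then have "k < m" using b unfolding B_def by auto
      then show ?thesis using blockW(3)[OF n r] Inl unfolding Q_def E_def by auto
    next
      case (Inr pq)
      then have "fst pq < snd pq" "snd pq < 2*m" using b unfolding B_def XI_def by auto
      then show ?thesis using blockX(3)[OF nm] Inr unfolding Q_def E_def by auto
    qed
  next
    fix b b' assume bb: "b \<in> B" "b' \<in> B" "b \<noteq> b'"
    show "E b \<inter> E b' = {}"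
    proof (cases b)
      case (Inl i)
      show ?thesis
      proof (cases b')
        case (Inl j)
        then show ?thesis using \<open>b = Inl i\<close> bb EW_EW unfolding E_def by auto
      next
        case (Inr pq)
        then have "fst pq < snd pq" "snd pq < 2*m" "fst pq div 2 \<noteq> snd pq div 2"
          using bb unfolding B_def XI_def by auto
        then show ?thesis using \<open>b = Inl i\<close> Inr EW_EX unfolding E_def by auto
      qed
    next
      case (Inr pq)
      then have pq: "fst pq < snd pq" "snd pq < 2*m" "fst pq div 2 \<noteq> snd pq div 2"
        using bb unfolding B_def XI_def by auto
      show ?thesis
      proof (cases b')
        case (Inl j)
        then show ?thesis using Inr pq EW_EX[of "fst pq" "snd pq" m n j] unfolding E_def by auto
      next
        case (Inr pq')
        then have "fst pq' < snd pq'" using bb unfolding B_def XI_def by auto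
        moreover have "pq \<noteq> pq'" using \<open>b = Inr pq\<close> Inr bb by auto
        ultimately show ?thesis using \<open>b = Inr pq\<close> Inr pq EX_EX[of "fst pq" "snd pq" "fst pq'" "snd pq'"]
          unfolding E_def by (auto simp: prod_eq_iff)
      qed
    qed
  next
    show "(\<Union>b\<in>B. E b) = complete_edges {..<n} - Lv n"
      unfolding compl_minus
    proof
      show "(\<Union>b\<in>B. E b) \<subseteq> {{u,v}|u v. u<v \<and> v<n \<and> u div 2 \<noteq> v div 2}"
      proof
        fix e assume "e \<in> (\<Union>b\<in>B. E b)"
        then obtain b where b: "b \<in> B" "e \<in> E b" by blast
        show "e \<in> {{u,v}|u v. u<v \<and> v<n \<and> u div 2 \<noteq> v div 2}"
        proof (cases b)
          case (Inl i)
          then show ?thesis using b EW_sub[OF n r] unfolding E_def by auto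
        next
          case (Inr pq)
          then have "fst pq < snd pq" "snd pq < 2*m" "fst pq div 2 \<noteq> snd pq div 2"
            using b unfolding B_def XI_def by auto
          then have "EXb (fst pq) (snd pq) \<subseteq> {{u,v}|u v. u<v \<and> v<n \<and> u div 2 \<noteq> v div 2}"
            by (rule EX_sub[OF n])
          then show ?thesis using b Inr unfolding E_def by auto
        qed
      qed
      show "{{u,v}|u v. u<v \<and> v<n \<and> u div 2 \<noteq> v div 2} \<subseteq> (\<Union>b\<in>B. E b)"
      proof
        fix e assume e: "e \<in> {{u,v}|u v. u<v \<and> v<n \<and> u div 2 \<noteq> v div 2}"
        from cover[OF n r e] show "e \<in> (\<Union>b\<in>B. E b)"
        proof
          assume "\<exists>i<m. e \<in> EWb n m i"
          then obtain i where "i < m" "e \<in> EWb n m i" by blast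
          then have "Inl i \<in> B" "e \<in> E (Inl i)" unfolding B_def E_def by auto
          then show ?thesis by blast
        next
          assume "\<exists>p q. p < q \<and> q < 2*m \<and> p div 2 \<noteq> q div 2 \<and> e \<in> EXb p q"
          then obtain p q where "p < q" "q < 2*m" "p div 2 \<noteq> q div 2" "e \<in> EXb p q" by blast
          then have "Inr (p,q) \<in> B" "e \<in> E (Inr (p,q))" unfolding B_def E_def XI_def by auto
          then show ?thesis by blast
        qed
      qed
    qed
  next
    show "Lv n \<subseteq> complete_edges {..<n}" by (rule Lv_sub)
  qed
  then show ?thesis by blast
qed

theorem lemma3p9:
  fixes n :: nat
  assumes "n \<ge> 8" and "n mod 16 \<in> {0, 2, 8, 10}"
  shows "\<exists>Cs L. is_maximum_8cycle_packing {..<n} Cs L \<and> almost_2_perfect {..<n} Cs L"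
proof -
  define m where "m = n div 8"
  define r where "r = n mod 8"
  have n: "n = 8*m + r" unfolding m_def r_def by simp
  have h: "n mod 8 = (n mod 16) mod 8" using mod_mod_cancel[of 8 16 n] by simp
  have r: "r = 0 \<or> r = 2" using assms(2) h unfolding r_def by auto
  have ev: "even n" using n r by auto
  obtain Cs where Cs: "is_8cycle_packing {..<n} Cs (Lv n)" "almost_2_perfect {..<n} Cs (Lv n)"
    using construction[OF n r] by blast
  have "card (Lv n) = n div 2" unfolding Lv_def by (rule card_leave[OF ev])
  then have "is_maximum_8cycle_packing {..<n} Cs (Lv n)"
    unfolding is_maximum_8cycle_packing_def
  proof (intro conjI Cs(1) allI impI)
    fix Cs' L' assume "is_8cycle_packing {..<n} Cs' L'"
    then have "n \<le> 2 * card L'" by (rule leave_bound[OF _ ev])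
    then show "card (Lv n) \<le> card L'" using \<open>card (Lv n) = n div 2\<close> by linarith
  qed
  then show ?thesis using Cs(2) by blast
qed


end
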